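(* Let $(\Omega,\mathcal H,\mathbb E)$ be a sublinear expectation space with $\mathbb E[\cdot]=\sup_{\theta\in\Theta}E_{P_\theta}[\cdot]$, and consider a discrete memoryless uncertain-distribution channel $[\mathcal X,\{\boldsymbol P_\lambda\}_{\lambda\in\Lambda},\mathcal Y]$ with finite alphabets. Let $(M_n,n,\varphi_n,\psi_n)$, $n\ge1$, be a sequence of nonlinear channel codes, all with coding rate $R_c$. If $\sup_{\theta\in\Theta}P^{(n)}_{e,\theta}\to0$ as $n\to\infty$, then $R_c\le\overline C$.
   Context: Sublinear expectation space: $\mathcal H$ a linear space of real functions on $\Omega$ (containing constants, closed under $|\cdot|$ and under bounded Borel functions of finitely many elements), $\mathbb E$ monotone, constant preserving, subadditive and positively homogeneous, here represented as $\sup_\theta E_{P_\theta}$ for probability measures $P_\theta$. Channel: $\boldsymbol P_\lambda=(p_\lambda(y|x))$ are transition probability matrices from $\mathcal X$ to $\mathcal Y$; memoryless means that for input random variables $X_1,\dots,X_n$ and output random variables $Y_1,\dots,Y_n$ on the space, for all $x_i,y_i$: $\{P_\theta(Y_1=y_1,\dots,Y_n=y_n|X_1=x_1,\dots,X_n=x_n)\}_{\theta\in\Theta}=\{\prod_{i=1}^n p_\lambda(y_i|x_i)\}_{\lambda\in\Lambda}$. A $(M,n,\varphi_n,\psi_n)$ nonlinear channel code has message set $\mathcal S=\{1,\dots,M\}$, encoder $\varphi_n:\mathcal S\to\mathcal X^n$ and decoder $\psi_n:\mathcal Y^n\to\mathcal S$; rate $\frac{\log M}{n}$. The message $S$ is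 a random variable on the space, $\boldsymbol X^n=\varphi_n(S)$ is sent, $\boldsymbol Y^n$ is the channel output, $\hat S=\psi_n(\boldsymbol Y^n)$, and $P^{(n)}_{e,\theta}=P_\theta(\hat S\ne S)$, so $\mathbb E[I_{\{\hat S\ne S\}}]=\sup_\theta P^{(n)}_{e,\theta}$. Finally $\overline C=\sup_{p}\sup_{\lambda\in\Lambda}\sum_{x,y}p(x)p_\lambda(y|x)\log\frac{p_\lambda(y|x)}{\sum_{x'}p(x')p_\lambda(y|x')}$, the first supremum over all probability distributions $p$ on $\mathcal X$. *)

theory Defs
  imports "HOL-Probability.Probability"
begin

definition stoch_matrix :: "('x::finite \<Rightarrow> 'y::finite \<Rightarrow> real) \<Rightarrow> bool" where
  "stoch_matrix W \<longleftrightarrow> (\<forall>x y. 0 \<le> W x y) \<and> (\<forall>x. (\<Sum>y\<in>UNIV. W x y) = 1)"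

definition input_dist :: "('x::finite \<Rightarrow> real) \<Rightarrow> bool" where
  "input_dist p \<longleftrightarrow> (\<forall>x. 0 \<le> p x) \<and> (\<Sum>x\<in>UNIV. p x) = 1"

text \<open>Mutual information of input distribution p and channel W (natural log;
the convention 0 log 0 = 0 is automatic since ln 0 = 0 in Isabelle).\<close>
definition mutual_info :: "('x::finite \<Rightarrow> real) \<Rightarrow> ('x \<Rightarrow> 'y::finite \<Rightarrow> real) \<Rightarrow> real" where
  "mutual_info p W =
     (\<Sum>x\<in>UNIV. \<Sum>y\<in>UNIV. p x * W x y * ln (W x y / (\<Sum>x'\<in>UNIV. p x' * W x' y)))"

definition upper_capacity :: "('l \<Rightarrow> 'x::finite \<Rightarrow> 'y::finite \<Rightarrow> real) \<Rightarrow> 'l set \<Rightarrow> real" where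
  "upper_capacity W \<Lambda> = (SUP pl \<in> {p. input_dist p} \<times> \<Lambda>. mutual_info (fst pl) (W (snd pl)))"

text \<open>Under the probability measure M, the conditional law of the output word Y given
the input word X (length n) is the memoryless product channel built from W:
  P(X = xs, Y = ys) = P(X = xs) * prod_i W(x_i, y_i),
i.e. P(Y = ys | X = xs) = prod_i W(x_i,y_i) whenever P(X = xs) > 0.\<close>
definition memoryless_law ::
  "'w measure \<Rightarrow> ('w \<Rightarrow> 'x list) \<Rightarrow> ('w \<Rightarrow> 'y list) \<Rightarrow> ('x \<Rightarrow> 'y \<Rightarrow> real) \<Rightarrow> nat \<Rightarrow> bool" where
  "memoryless_law M X Y W n \<longleftrightarrow>
     (\<forall>xs ys. length xs = n \<longrightarrow> length ys = n \<longrightarrow>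
        measure M {\<omega> \<in> space M. X \<omega> = xs \<and> Y \<omega> = ys}
          = measure M {\<omega> \<in> space M. X \<omega> = xs} * (\<Prod>i<n. W (xs ! i) (ys ! i)))"

end

theory Submission
  imports Defs
begin

lemma finite_len: "finite {ys::'y::finite list. length ys = n}"
  using finite_lists_length_eq[of "UNIV::'y set" n] by simp

lemma len_Suc_img: "{ys::'y list. length ys = Suc n} = (\<lambda>(t,ys). t#ys) ` (UNIV \<times> {ys. length ys = n})"
  by (auto simp: length_Suc_conv)

lemma sum_lists_prod:
  "(\<Sum>ys\<in>{ys::'y::finite list. length ys = n}. \<Prod>j<n. F j (ys!j)) = (\<Prod>j<n. \<Sum>t\<in>UNIV. (F j t :: real))"
proof (induction n arbitrary: F)
  case 0
  have "{ys::'y list. length ys = 0} = {[]}" by auto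
  then show ?case by simp
next
  case (Suc n)
  have inj: "inj_on (\<lambda>(t,ys). t#ys) (UNIV \<times> {ys::'y list. length ys = n})"
    by (auto simp: inj_on_def)
  have "(\<Sum>ys\<in>{ys::'y list. length ys = Suc n}. \<Prod>j<Suc n. F j (ys!j))
      = (\<Sum>(t,ys)\<in>UNIV \<times> {ys::'y list. length ys = n}. \<Prod>j<Suc n. F j ((t#ys)!j))"
    unfolding len_Suc_img by (subst sum.reindex[OF inj]) (simp add: case_prod_unfold)
  also have "\<dots> = (\<Sum>t\<in>UNIV. \<Sum>ys\<in>{ys::'y list. length ys = n}. F 0 t * (\<Prod>j<n. F (Suc j) (ys!j)))"
    by (subst sum.cartesian_product[symmetric]) (simp only: prod.lessThan_Suc_shift nth_Cons_0 nth_Cons_Suc)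
  also have "\<dots> = (\<Sum>t\<in>UNIV. F 0 t * (\<Prod>j<n. \<Sum>t\<in>UNIV. F (Suc j) t))"
    using Suc.IH[of "\<lambda>j. F (Suc j)"] by (simp add: sum_distrib_left[symmetric])
  also have "\<dots> = (\<Prod>j<Suc n. \<Sum>t\<in>UNIV. F j t)"
    by (simp only: prod.lessThan_Suc_shift sum_distrib_right)
  finally show ?case .
qed

lemma sum_lists_marg:
  assumes "i < n" and "\<And>j. (\<Sum>t\<in>UNIV. V j t) = (1::real)"
  shows "(\<Sum>ys\<in>{ys::'y::finite list. length ys = n}. (\<Prod>j<n. V j (ys!j)) * h (ys!i)) = (\<Sum>t\<in>UNIV. V i t * h t)"
proof -
  have "(\<Sum>ys\<in>{ys::'y::finite list. length ys = n}. (\<Prod>j<n. V j (ys!j)) * h (ys!i))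
     = (\<Sum>ys\<in>{ys::'y::finite list. length ys = n}. \<Prod>j<n. V j (ys!j) * (if j = i then h (ys!j) else 1))"
    using assms(1) by (simp add: prod.distrib prod.delta)
  also have "\<dots> = (\<Prod>j<n. \<Sum>t\<in>UNIV. V j t * (if j = i then h t else 1))"
    by (rule sum_lists_prod)
  also have "\<dots> = (\<Prod>j<n. if j = i then (\<Sum>t\<in>UNIV. V i t * h t) else 1)"
    by (rule prod.cong) (auto simp: assms(2))
  also have "\<dots> = (\<Sum>t\<in>UNIV. V i t * h t)" using assms(1) by (simp add: prod.delta)
  finally show ?thesis .
qed

lemma core:
  fixes V :: "'x::finite \<Rightarrow> 'y::finite \<Rightarrow> real" and enc :: "nat \<Rightarrow> 'x list"
    and dec :: "'y list \<Rightarrow> nat" and m n :: nat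
  assumes V: "stoch_matrix V" and m: "m \<ge> 1"
    and enc: "\<forall>s\<in>{1..m}. length (enc s) = n"
    and dec: "\<forall>ys. length ys = n \<longrightarrow> dec ys \<in> {1..m}"
  defines "p \<equiv> \<lambda>i x. (\<Sum>s\<in>{1..m}. if enc s ! i = x then 1 else 0) / real m"
  shows "(\<Sum>s\<in>{1..m}. \<Sum>ys\<in>{ys. length ys = n}. if dec ys = s then (\<Prod>j<n. V (enc s ! j) (ys!j)) / m else 0) * ln m - 1
           \<le> (\<Sum>i<n. mutual_info (p i) V)"
    and "input_dist (p i)"
proof -
  define Yn where "Yn = {ys::'y list. length ys = n}"
  define Sm where "Sm = {1..m}"
  have finYn: "finite Yn" unfolding Yn_def by (rule finite_len)
  have finSm: "finite Sm" unfolding Sm_def by simp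
  have mpos: "real m > 0" using m by simp
  define Wn where "Wn s ys = (\<Prod>j<n. V (enc s ! j) (ys!j))" for s ys
  define PY where "PY i t = (\<Sum>x\<in>UNIV. p i x * V x t)" for i t
  define Q where "Q ys = (\<Prod>j<n. PY j (ys!j))" for ys
  have Vnn: "V x y \<ge> 0" for x y using V by (simp add: stoch_matrix_def)
  have Vrow: "(\<Sum>y\<in>UNIV. V x y) = 1" for x using V by (simp add: stoch_matrix_def)
  have pnn: "p i x \<ge> 0" for i x unfolding p_def using m by (auto intro!: sum_nonneg divide_nonneg_pos)
  have psum: "(\<Sum>x\<in>UNIV. p i x) = 1" for i
  proof -
    have "(\<Sum>x\<in>UNIV. p i x) = (\<Sum>x\<in>UNIV. \<Sum>s\<in>{1..m}. if enc s ! i = x then 1 else 0) / real m"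
      unfolding p_def by (simp add: sum_divide_distrib)
    also have "\<dots> = (\<Sum>s\<in>{1..m}. \<Sum>x\<in>UNIV. if enc s ! i = x then 1 else 0) / real m"
      by (subst sum.swap) simp
    also have "\<dots> = 1" using mpos by simp
    finally show ?thesis .
  qed
  show "input_dist (p i)" unfolding input_dist_def using pnn psum by auto
  have ppos: "p i (enc s ! i) \<ge> 1 / real m" if "s \<in> Sm" for i s
  proof -
    have "(1::real) \<le> (\<Sum>s'\<in>{1..m}. if enc s' ! i = enc s ! i then 1 else 0)"
      using member_le_sum[of s "{1..m}" "\<lambda>s'. if enc s' ! i = enc s ! i then (1::real) else 0"] that
      unfolding Sm_def by auto
    then show ?thesis unfolding p_def using mpos by (simp add: divide_right_mono)
  qed
  have PYnn: "PY i t \<ge> 0" for i t unfolding PY_def using pnn Vnn by (auto intro!: sum_nonneg)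
  have PYsum: "(\<Sum>t\<in>UNIV. PY i t) = 1" for i
  proof -
    have "(\<Sum>t\<in>UNIV. PY i t) = (\<Sum>x\<in>UNIV. p i x * (\<Sum>t\<in>UNIV. V x t))"
      unfolding PY_def by (subst sum.swap) (simp add: sum_distrib_left)
    then show ?thesis using psum Vrow by simp
  qed
  have Qnn: "Q ys \<ge> 0" for ys unfolding Q_def using PYnn by (auto intro!: prod_nonneg)
  have Wnn: "Wn s ys \<ge> 0" for s ys unfolding Wn_def using Vnn by (auto intro!: prod_nonneg)
  have Wsum: "(\<Sum>ys\<in>Yn. Wn s ys) = 1" for s
    unfolding Yn_def Wn_def using sum_lists_prod[where F="\<lambda>j. V (enc s ! j)"] Vrow by simp
  have Qsum: "(\<Sum>ys\<in>Yn. Q ys) = 1"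
    unfolding Yn_def Q_def using sum_lists_prod[where F="\<lambda>j. PY j"] PYsum by simp
  have posfacts: "(\<forall>j<n. V (enc s ! j) (ys ! j) > 0 \<and> PY j (ys!j) > 0) \<and> Q ys > 0"
    if "s \<in> Sm" "Wn s ys \<noteq> 0" for s ys
  proof -
    have A: "V (enc s ! j) (ys ! j) > 0" if "j < n" for j
      using \<open>Wn s ys \<noteq> 0\<close> that Vnn[of "enc s ! j" "ys ! j"] unfolding Wn_def
      by (auto simp: prod_zero_iff less_le)
    have B: "PY j (ys!j) > 0" if "j < n" for j
    proof -
      have "p j (enc s ! j) * V (enc s ! j) (ys!j) \<le> PY j (ys!j)"
        unfolding PY_def
        using member_le_sum[of "enc s ! j" UNIV "\<lambda>x. p j x * V x (ys!j)"] pnn Vnn by auto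
      moreover have "p j (enc s ! j) > 0" using ppos[OF \<open>s \<in> Sm\<close>, of j] mpos
        by (smt (verit) divide_pos_pos)
      ultimately show ?thesis using A[OF that] by (smt (verit) mult_pos_pos)
    qed
    have "Q ys > 0" unfolding Q_def using B by (auto intro!: prod_pos)
    then show ?thesis using A B by auto
  qed
  have logexp: "Wn s ys * ln (Wn s ys / Q ys) = (\<Sum>i<n. Wn s ys * ln (V (enc s ! i) (ys!i) / PY i (ys!i)))"
    if "s \<in> Sm" for s ys
  proof (cases "Wn s ys = 0")
    case True then show ?thesis by simp
  next
    case False
    from posfacts[OF that False] have pf: "\<forall>j<n. V (enc s ! j) (ys ! j) > 0 \<and> PY j (ys!j) > 0" by blast
    have "Wn s ys / Q ys = (\<Prod>i<n. V (enc s ! i) (ys!i) / PY i (ys!i))"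
      unfolding Wn_def Q_def by (simp add: prod_dividef)
    then have "ln (Wn s ys / Q ys) = (\<Sum>i<n. ln (V (enc s ! i) (ys!i) / PY i (ys!i)))"
      using pf by (simp only:) (subst ln_prod, auto)
    then show ?thesis by (simp add: sum_distrib_left)
  qed
  define G where "G i x = (\<Sum>t\<in>UNIV. V x t * ln (V x t / PY i t))" for i x
  have MI: "mutual_info (p i) V = (\<Sum>x\<in>UNIV. p i x * G i x)" for i
    unfolding mutual_info_def G_def PY_def by (simp add: sum_distrib_left mult.assoc)
  have group: "(\<Sum>s\<in>Sm. G i (enc s ! i) / m) = (\<Sum>x\<in>UNIV. p i x * G i x)" for i
  proof -
    have px: "p i x * G i x = (\<Sum>s\<in>Sm. if enc s ! i = x then G i x / m else 0)" for x
    proof -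
      have "(\<Sum>s\<in>Sm. if enc s ! i = x then G i x / m else 0)
          = (\<Sum>s\<in>Sm. (if enc s ! i = x then 1 else 0) * (G i x / m))"
        by (rule sum.cong) auto
      also have "\<dots> = (\<Sum>s\<in>Sm. (if enc s ! i = x then 1 else 0)) * (G i x / m)"
        by (rule sum_distrib_right[symmetric])
      finally show ?thesis unfolding p_def Sm_def by simp
    qed
    have "(\<Sum>x\<in>UNIV. p i x * G i x) = (\<Sum>x\<in>UNIV. \<Sum>s\<in>Sm. if enc s ! i = x then G i x / m else 0)"
      using px by simp
    also have "\<dots> = (\<Sum>s\<in>Sm. \<Sum>x\<in>UNIV. if enc s ! i = x then G i x / m else 0)" by (rule sum.swap)
    also have "\<dots> = (\<Sum>s\<in>Sm. G i (enc s ! i) / m)" by simp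
    finally show ?thesis by simp
  qed
  have D: "(\<Sum>s\<in>Sm. \<Sum>ys\<in>Yn. Wn s ys / m * ln (Wn s ys / Q ys)) = (\<Sum>i<n. mutual_info (p i) V)"
  proof -
    have "(\<Sum>s\<in>Sm. \<Sum>ys\<in>Yn. Wn s ys / m * ln (Wn s ys / Q ys))
        = (\<Sum>s\<in>Sm. \<Sum>ys\<in>Yn. \<Sum>i<n. Wn s ys * ln (V (enc s ! i) (ys!i) / PY i (ys!i)) / m)"
    proof (intro sum.cong refl)
      fix s ys assume "s \<in> Sm" "ys \<in> Yn"
      show "Wn s ys / m * ln (Wn s ys / Q ys) = (\<Sum>i<n. Wn s ys * ln (V (enc s ! i) (ys!i) / PY i (ys!i)) / m)"
        using logexp[OF \<open>s \<in> Sm\<close>, of ys] by (simp add: sum_divide_distrib[symmetric])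
    qed
    also have "\<dots> = (\<Sum>s\<in>Sm. \<Sum>i<n. \<Sum>ys\<in>Yn. Wn s ys * ln (V (enc s ! i) (ys!i) / PY i (ys!i)) / m)"
      by (rule sum.cong[OF refl]) (rule sum.swap)
    also have "\<dots> = (\<Sum>i<n. \<Sum>s\<in>Sm. \<Sum>ys\<in>Yn. Wn s ys * ln (V (enc s ! i) (ys!i) / PY i (ys!i)) / m)"
      by (rule sum.swap)
    also have "\<dots> = (\<Sum>i<n. \<Sum>s\<in>Sm. G i (enc s ! i) / m)"
    proof (intro sum.cong refl)
      fix i s assume "i \<in> {..<n}" "s \<in> Sm"
      have "(\<Sum>ys\<in>Yn. Wn s ys * ln (V (enc s ! i) (ys!i) / PY i (ys!i))) = G i (enc s ! i)"
        unfolding Wn_def Yn_def G_def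
        using sum_lists_marg[of i n "\<lambda>j. V (enc s ! j)" "\<lambda>t. ln (V (enc s ! i) t / PY i t)"] Vrow
          \<open>i \<in> {..<n}\<close> by simp
      then show "(\<Sum>ys\<in>Yn. Wn s ys * ln (V (enc s ! i) (ys!i) / PY i (ys!i)) / m) = G i (enc s ! i) / m"
        by (simp add: sum_divide_distrib[symmetric])
    qed
    also have "\<dots> = (\<Sum>i<n. mutual_info (p i) V)" using group MI by simp
    finally show ?thesis .
  qed
  have pw: "Wn s ys / m * ln (Wn s ys / Q ys) \<ge> (if dec ys = s then Wn s ys / m else 0) * ln m
             + Wn s ys / m - Q ys / m * (if dec ys = s then m else 1)" if "s \<in> Sm" for s ys
  proof (cases "Wn s ys = 0")
    case True then show ?thesis using Qnn[of ys] mpos by simp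
  next
    case False
    define a where "a = Wn s ys / m"
    define g where "g = (if dec ys = s then real m else 1)"
    define b where "b = Q ys / m * g"
    have Qp: "Q ys > 0" using posfacts[OF that False] by blast
    have ap: "a > 0" unfolding a_def using Wnn[of s ys] False mpos by simp
    have g1: "g \<ge> 1" unfolding g_def using m by simp
    have bp: "b > 0" unfolding b_def using Qp mpos g1 by simp
    have eq: "(a / b) * g = Wn s ys / Q ys" unfolding a_def b_def using mpos g1 Qp by (simp add: divide_simps)
    have "ln ((a / b) * g) = ln (a / b) + ln g"
      by (rule ln_mult_pos) (use ap bp g1 in auto)
    then have split: "ln (Wn s ys / Q ys) = ln (a / b) + ln g" unfolding eq .
    have "ln (b / a) \<le> b / a - 1" using ap bp by (intro ln_le_minus_one) simp
    then have "a * ln (b / a) \<le> a * (b / a - 1)" using ap by (intro mult_left_mono) auto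
    also have "a * (b / a - 1) = b - a" using ap by (simp add: field_simps)
    finally have l1: "a * ln (b / a) \<le> b - a" .
    have "ln (a / b) = - ln (b / a)" using ap bp by (simp add: ln_div)
    then have "a * ln (a / b) \<ge> a - b" using l1 by simp
    moreover have "a * ln g = (if dec ys = s then a else 0) * ln m" by (simp add: g_def)
    moreover have "a * ln (Wn s ys / Q ys) = a * ln (a / b) + a * ln g" by (simp add: split distrib_left)
    moreover have e1: "Wn s ys / m = a" by (simp add: a_def)
    moreover have e2: "Q ys / m * (if dec ys = s then m else 1) = b" by (simp add: b_def g_def)
    ultimately show ?thesis unfolding e1 e2 by linarith
  qed
  have card: "card Sm = m" unfolding Sm_def by simp
  have sumQ: "(\<Sum>s\<in>Sm. \<Sum>ys\<in>Yn. Q ys / m * (if dec ys = s then m else 1)) \<le> 2"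
  proof -
    have "(\<Sum>s\<in>Sm. \<Sum>ys\<in>Yn. Q ys / m * (if dec ys = s then m else 1))
        \<le> (\<Sum>s\<in>Sm. \<Sum>ys\<in>Yn. Q ys / m + (if dec ys = s then Q ys else 0))"
      by (intro sum_mono) (use Qnn mpos in auto)
    also have "\<dots> = (\<Sum>s\<in>Sm. \<Sum>ys\<in>Yn. Q ys / m) + (\<Sum>ys\<in>Yn. \<Sum>s\<in>Sm. if dec ys = s then Q ys else 0)"
      by (simp add: sum.distrib sum.swap[of _ Sm])
    also have "(\<Sum>ys\<in>Yn. \<Sum>s\<in>Sm. if dec ys = s then Q ys else 0) = (\<Sum>ys\<in>Yn. Q ys)"
      by (intro sum.cong refl) (use dec finSm in \<open>auto simp: Yn_def Sm_def\<close>)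
    also have "(\<Sum>s\<in>Sm. \<Sum>ys\<in>Yn. Q ys / m) = 1"
      using Qsum card mpos by (simp add: sum_divide_distrib[symmetric])
    finally show ?thesis using Qsum by simp
  qed
  have sumW: "(\<Sum>s\<in>Sm. \<Sum>ys\<in>Yn. Wn s ys / m) = 1"
    using Wsum card mpos by (simp add: sum_divide_distrib[symmetric])
  define Ps where "Ps = (\<Sum>s\<in>Sm. \<Sum>ys\<in>Yn. if dec ys = s then Wn s ys / m else 0)"
  have "(\<Sum>s\<in>Sm. \<Sum>ys\<in>Yn. (if dec ys = s then Wn s ys / m else 0) * ln m
             + Wn s ys / m - Q ys / m * (if dec ys = s then m else 1))
      \<le> (\<Sum>s\<in>Sm. \<Sum>ys\<in>Yn. Wn s ys / m * ln (Wn s ys / Q ys))"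
    by (intro sum_mono) (use pw in auto)
  moreover have "(\<Sum>s\<in>Sm. \<Sum>ys\<in>Yn. (if dec ys = s then Wn s ys / m else 0) * ln m
             + Wn s ys / m - Q ys / m * (if dec ys = s then m else 1))
      = Ps * ln m + (\<Sum>s\<in>Sm. \<Sum>ys\<in>Yn. Wn s ys / m) - (\<Sum>s\<in>Sm. \<Sum>ys\<in>Yn. Q ys / m * (if dec ys = s then m else 1))"
    unfolding Ps_def by (simp add: sum.distrib sum_subtractf sum_distrib_right)
  ultimately have "Ps * ln m - 1 \<le> (\<Sum>i<n. mutual_info (p i) V)"
    using D sumQ sumW by linarith
  then show "(\<Sum>s\<in>{1..m}. \<Sum>ys\<in>{ys. length ys = n}. if dec ys = s then (\<Prod>j<n. V (enc s ! j) (ys!j)) / m else 0) * ln m - 1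
           \<le> (\<Sum>i<n. mutual_info (p i) V)"
    unfolding Ps_def Sm_def Yn_def Wn_def .
qed


lemma mi_bound:
  fixes p :: "'x::finite \<Rightarrow> real" and V :: "'x \<Rightarrow> 'y::finite \<Rightarrow> real"
  assumes p: "input_dist p" and V: "stoch_matrix V"
  shows "mutual_info p V \<le> real CARD('x)"
proof -
  have pnn: "p x \<ge> 0" for x using p by (simp add: input_dist_def)
  have Vnn: "V x y \<ge> 0" for x y using V by (simp add: stoch_matrix_def)
  have Vrow: "(\<Sum>y\<in>UNIV. V x y) = 1" for x using V by (simp add: stoch_matrix_def)
  have trm: "p x * V x y * ln (V x y / (\<Sum>x'\<in>UNIV. p x' * V x' y)) \<le> V x y" for x y
  proof (cases "p x * V x y = 0")
    case True then show ?thesis using Vnn[of x y] by (simp only: True mult_zero_left)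
  next
    case False
    define q where "q = (\<Sum>x'\<in>UNIV. p x' * V x' y)"
    have pp: "p x > 0" using False pnn by (metis less_eq_real_def mult_zero_left)
    have vp: "V x y > 0" using False Vnn by (metis less_eq_real_def mult_zero_right)
    have "p x * V x y \<le> q" unfolding q_def
      using member_le_sum[of x UNIV "\<lambda>x'. p x' * V x' y"] pnn Vnn by auto
    then have qp: "q > 0" using pp vp by (smt (verit) mult_pos_pos)
    have "ln (V x y / q) \<le> V x y / q - 1" using vp qp by (intro ln_le_minus_one) simp
    also have "\<dots> \<le> V x y / q" by simp
    finally have "p x * V x y * ln (V x y / q) \<le> p x * V x y * (V x y / q)"
      using pp vp by (intro mult_left_mono) auto
    also have "p x * V x y * (V x y / q) = V x y * (p x * V x y / q)" by simp
    also have "\<dots> \<le> V x y * 1"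
      using \<open>p x * V x y \<le> q\<close> qp vp by (intro mult_left_mono) auto
    finally show ?thesis unfolding q_def by simp
  qed
  have "mutual_info p V \<le> (\<Sum>x\<in>UNIV. \<Sum>y\<in>UNIV. V x y)"
    unfolding mutual_info_def by (intro sum_mono trm)
  also have "\<dots> = real CARD('x)" using Vrow by simp
  finally show ?thesis .
qed

lemma meas_set:
  assumes "f \<in> measurable M (count_space UNIV)"
  shows "{\<omega>\<in>space M. Q (f \<omega>)} \<in> sets M"
proof -
  have "{\<omega>\<in>space M. Q (f \<omega>)} = f -` {x. Q x} \<inter> space M" by auto
  then show ?thesis using measurable_sets[OF assms, of "{x. Q x}"] by simp
qed

theorem theorem11:
  fixes P :: "'th \<Rightarrow> 'w measure" and \<Theta> :: "'th set"
    and W :: "'l \<Rightarrow> 'x::finite \<Rightarrow> 'y::finite \<Rightarrow> real" and \<Lambda> :: "'l set"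
    and M :: "nat \<Rightarrow> nat"
    and enc :: "nat \<Rightarrow> nat \<Rightarrow> 'x list" and dec :: "nat \<Rightarrow> 'y list \<Rightarrow> nat"
    and S :: "nat \<Rightarrow> 'w \<Rightarrow> nat" and Y :: "nat \<Rightarrow> 'w \<Rightarrow> 'y list"
    and Rc :: real
  assumes Theta_ne: "\<Theta> \<noteq> {}"
    and prob: "\<forall>\<theta>\<in>\<Theta>. prob_space (P \<theta>)"
    and Lambda_ne: "\<Lambda> \<noteq> {}"
    and chan: "\<forall>l\<in>\<Lambda>. stoch_matrix (W l)"
    and code: "\<forall>n\<ge>1. M n \<ge> 1 \<and> (\<forall>s\<in>{1..M n}. length (enc n s) = n)
                   \<and> (\<forall>ys. length ys = n \<longrightarrow> dec n ys \<in> {1..M n})"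
    and rate: "\<forall>n\<ge>1. ln (real (M n)) / real n = Rc"
    and meas: "\<forall>n\<ge>1. \<forall>\<theta>\<in>\<Theta>. S n \<in> measurable (P \<theta>) (count_space UNIV)
                   \<and> Y n \<in> measurable (P \<theta>) (count_space UNIV)"
    and vals: "\<forall>n\<ge>1. \<forall>\<theta>\<in>\<Theta>. \<forall>\<omega>\<in>space (P \<theta>). S n \<omega> \<in> {1..M n} \<and> length (Y n \<omega>) = n"
    and uniform: "\<forall>n\<ge>1. \<forall>\<theta>\<in>\<Theta>. \<forall>s\<in>{1..M n}.
                   measure (P \<theta>) {\<omega> \<in> space (P \<theta>). S n \<omega> = s} = 1 / real (M n)"
    and memoryless1: "\<forall>n\<ge>1. \<forall>\<theta>\<in>\<Theta>. \<exists>l\<in>\<Lambda>.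
                   memoryless_law (P \<theta>) (\<lambda>\<omega>. enc n (S n \<omega>)) (Y n) (W l) n"
    and memoryless2: "\<forall>n\<ge>1. \<forall>l\<in>\<Lambda>. \<exists>\<theta>\<in>\<Theta>.
                   memoryless_law (P \<theta>) (\<lambda>\<omega>. enc n (S n \<omega>)) (Y n) (W l) n"
    and markov: "\<forall>n\<ge>1. \<forall>\<theta>\<in>\<Theta>. \<forall>s ys.
                   measure (P \<theta>) {\<omega> \<in> space (P \<theta>). S n \<omega> = s \<and> Y n \<omega> = ys}
                     * measure (P \<theta>) {\<omega> \<in> space (P \<theta>). enc n (S n \<omega>) = enc n s}
                   = measure (P \<theta>) {\<omega> \<in> space (P \<theta>). S n \<omega> = s}
                     * measure (P \<theta>) {\<omega> \<in> space (P \<theta>). enc n (S n \<omega>) = enc n s \<and> Y n \<omega> = ys}"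
    and err: "(\<lambda>n. SUP \<theta>\<in>\<Theta>. measure (P \<theta>) {\<omega> \<in> space (P \<theta>). dec n (Y n \<omega>) \<noteq> S n \<omega>})
                \<longlonglongrightarrow> 0"
  shows "Rc \<le> upper_capacity W \<Lambda>"
proof -
  define Cap where "Cap = upper_capacity W \<Lambda>"
  define e where "e n = (SUP \<theta>\<in>\<Theta>. measure (P \<theta>) {\<omega> \<in> space (P \<theta>). dec n (Y n \<omega>) \<noteq> S n \<omega>})" for n
  have bddMI: "bdd_above ((\<lambda>pl. mutual_info (fst pl) (W (snd pl))) ` ({p. input_dist p} \<times> \<Lambda>))"
    by (rule bdd_aboveI2[where M="real CARD('x)"]) (use chan in \<open>auto intro: mi_bound\<close>)
  have MIcap: "mutual_info p (W l) \<le> Cap" if "input_dist p" "l \<in> \<Lambda>" for p l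
  proof -
    have "mutual_info (fst (p, l)) (W (snd (p, l))) \<le> Cap"
      unfolding Cap_def upper_capacity_def by (rule cSUP_upper[OF _ bddMI]) (use that in auto)
    then show ?thesis by simp
  qed
  have key: "(1 - e n) * Rc \<le> Cap + 1 / real n" if n1: "n \<ge> 1" for n
  proof -
    obtain \<theta> where th: "\<theta> \<in> \<Theta>" using Theta_ne by blast
    obtain l where l: "l \<in> \<Lambda>" and ml: "memoryless_law (P \<theta>) (\<lambda>\<omega>. enc n (S n \<omega>)) (Y n) (W l) n"
      using memoryless1 n1 th by blast
    interpret ps: prob_space "P \<theta>" using prob th by blast
    define Mn where "Mn = M n"
    define Yn where "Yn = {ys::'y list. length ys = n}"
    have finYn: "finite Yn" unfolding Yn_def by (rule finite_len)
    have Mn1: "Mn \<ge> 1" and encl: "\<forall>s\<in>{1..Mn}. length (enc n s) = n"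
      and decl: "\<forall>ys. length ys = n \<longrightarrow> dec n ys \<in> {1..Mn}"
      using code n1 unfolding Mn_def by auto
    have Smeas: "S n \<in> measurable (P \<theta>) (count_space UNIV)"
      and Ymeas: "Y n \<in> measurable (P \<theta>) (count_space UNIV)" using meas n1 th by auto
    have setsE: "{\<omega>\<in>space (P \<theta>). S n \<omega> = s \<and> Y n \<omega> = ys} \<in> sets (P \<theta>)" for s ys
    proof -
      have "{\<omega>\<in>space (P \<theta>). S n \<omega> = s \<and> Y n \<omega> = ys}
          = {\<omega>\<in>space (P \<theta>). S n \<omega> = s} \<inter> {\<omega>\<in>space (P \<theta>). Y n \<omega> = ys}" by auto
      then show ?thesis using sets.Int[OF meas_set[OF Smeas, of "\<lambda>x. x = s"] meas_set[OF Ymeas, of "\<lambda>x. x = ys"]] by simp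
    qed
    have measE: "measure (P \<theta>) {\<omega>\<in>space (P \<theta>). S n \<omega> = s \<and> Y n \<omega> = ys}
        = (\<Prod>j<n. W l (enc n s ! j) (ys!j)) / Mn" if s: "s \<in> {1..Mn}" and ys: "length ys = n" for s ys
    proof -
      define E where "E = measure (P \<theta>) {\<omega>\<in>space (P \<theta>). S n \<omega> = s \<and> Y n \<omega> = ys}"
      define F where "F = measure (P \<theta>) {\<omega>\<in>space (P \<theta>). enc n (S n \<omega>) = enc n s}"
      define G where "G = measure (P \<theta>) {\<omega>\<in>space (P \<theta>). S n \<omega> = s}"
      define H where "H = measure (P \<theta>) {\<omega>\<in>space (P \<theta>). enc n (S n \<omega>) = enc n s \<and> Y n \<omega> = ys}"
      define Wp where "Wp = (\<Prod>j<n. W l (enc n s ! j) (ys!j))"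
      have H: "H = F * Wp" using ml[unfolded memoryless_law_def, rule_format, of "enc n s" ys] encl s ys unfolding H_def F_def Wp_def by simp
      have mk: "E * F = G * H" using markov[rule_format, OF n1 th, of s ys] unfolding E_def F_def G_def H_def by simp
      have G: "G = 1 / Mn" using uniform[rule_format, OF n1 th s[unfolded Mn_def]] unfolding G_def Mn_def by simp
      have "G \<le> F" unfolding G_def F_def
        by (rule ps.finite_measure_mono) (use meas_set[OF Smeas, of "\<lambda>x. enc n x = enc n s"] in auto)
      moreover have "G > 0" using G Mn1 by simp
      ultimately have "F > 0" by simp
      moreover have "E * F = (G * Wp) * F" using mk H by (simp add: ac_simps)
      ultimately have "E = G * Wp" by simp
      then show ?thesis unfolding E_def G Wp_def by simp
    qed
    define Ps where "Ps = (\<Sum>s\<in>{1..Mn}. \<Sum>ys\<in>{ys. length ys = n}. if dec n ys = s then (\<Prod>j<n. W l (enc n s ! j) (ys!j)) / Mn else 0)"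
    define A where "A sy = {\<omega>\<in>space (P \<theta>). S n \<omega> = fst sy \<and> Y n \<omega> = snd sy \<and> dec n (snd sy) = fst sy}" for sy
    have union: "{\<omega>\<in>space (P \<theta>). dec n (Y n \<omega>) = S n \<omega>} = (\<Union>sy\<in>{1..Mn} \<times> Yn. A sy)"
      using vals n1 th unfolding A_def Yn_def Mn_def by auto
    have Asets: "A sy \<in> sets (P \<theta>)" for sy
    proof (cases "dec n (snd sy) = fst sy")
      case True
      then have "A sy = {\<omega>\<in>space (P \<theta>). S n \<omega> = fst sy \<and> Y n \<omega> = snd sy}" unfolding A_def by auto
      then show ?thesis using setsE by simp
    next
      case False
      then have "A sy = {}" unfolding A_def by auto
      then show ?thesis by simp
    qed
    have measA: "measure (P \<theta>) (A sy) = (if dec n (snd sy) = fst sy then (\<Prod>j<n. W l (enc n (fst sy) ! j) (snd sy!j)) / Mn else 0)"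
      if "sy \<in> {1..Mn} \<times> Yn" for sy
    proof (cases "dec n (snd sy) = fst sy")
      case True
      then have "A sy = {\<omega>\<in>space (P \<theta>). S n \<omega> = fst sy \<and> Y n \<omega> = snd sy}" unfolding A_def by auto
      then show ?thesis using measE[of "fst sy" "snd sy"] that True unfolding Yn_def by auto
    next
      case False
      then have "A sy = {}" unfolding A_def by auto
      then show ?thesis using False by simp
    qed
    have disj: "disjoint_family_on A ({1..Mn} \<times> Yn)"
      unfolding disjoint_family_on_def A_def by auto
    have "measure (P \<theta>) {\<omega>\<in>space (P \<theta>). dec n (Y n \<omega>) = S n \<omega>} = (\<Sum>sy\<in>{1..Mn} \<times> Yn. measure (P \<theta>) (A sy))"
      unfolding union by (rule ps.finite_measure_finite_Union) (use finYn Asets disj in auto)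
    also have "\<dots> = (\<Sum>sy\<in>{1..Mn} \<times> Yn. if dec n (snd sy) = fst sy then (\<Prod>j<n. W l (enc n (fst sy) ! j) (snd sy!j)) / Mn else 0)"
      by (rule sum.cong) (use measA in auto)
    also have "\<dots> = Ps" unfolding Ps_def Yn_def by (simp add: sum.cartesian_product case_prod_unfold)
    finally have succ: "measure (P \<theta>) {\<omega>\<in>space (P \<theta>). dec n (Y n \<omega>) = S n \<omega>} = Ps" .
    have succ_sets: "{\<omega>\<in>space (P \<theta>). dec n (Y n \<omega>) = S n \<omega>} \<in> sets (P \<theta>)"
      unfolding union by (intro sets.finite_UN) (use finYn Asets in auto)
    have "{\<omega>\<in>space (P \<theta>). dec n (Y n \<omega>) \<noteq> S n \<omega>} = space (P \<theta>) - {\<omega>\<in>space (P \<theta>). dec n (Y n \<omega>) = S n \<omega>}"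
      by auto
    then have Pe: "measure (P \<theta>) {\<omega>\<in>space (P \<theta>). dec n (Y n \<omega>) \<noteq> S n \<omega>} = 1 - Ps"
      using ps.prob_compl[OF succ_sets] succ by simp
    have bddE: "bdd_above ((\<lambda>\<theta>. measure (P \<theta>) {\<omega> \<in> space (P \<theta>). dec n (Y n \<omega>) \<noteq> S n \<omega>}) ` \<Theta>)"
      by (rule bdd_aboveI2[where M=1]) (use prob prob_space.prob_le_1 in fastforce)
    have "1 - Ps \<le> e n" unfolding e_def Pe[symmetric] by (rule cSUP_upper[OF th bddE])
    then have PsE: "1 - e n \<le> Ps" by simp
    define p where "p = (\<lambda>i x. (\<Sum>s\<in>{1..Mn}. if enc n s ! i = x then 1 else 0) / real Mn)"
    have pdist: "input_dist (p i)" for i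
      using core(2)[OF chan[rule_format, OF l] Mn1 encl decl, of i] unfolding p_def .
    have coreineq: "Ps * ln Mn - 1 \<le> (\<Sum>i<n. mutual_info (p i) (W l))"
      using core(1)[OF chan[rule_format, OF l] Mn1 encl decl] unfolding Ps_def p_def .
    have "(\<Sum>i<n. mutual_info (p i) (W l)) \<le> (\<Sum>i<n. Cap)"
      by (intro sum_mono MIcap pdist l)
    then have "Ps * ln Mn - 1 \<le> n * Cap" using coreineq by simp
    moreover have lnM: "ln Mn = n * Rc" using rate n1 unfolding Mn_def by (simp add: field_simps)
    moreover have "ln Mn \<ge> 0" using Mn1 by simp
    ultimately have "(1 - e n) * (n * Rc) - 1 \<le> n * Cap"
      using PsE by (smt (verit) mult_right_mono)
    moreover have "real n * (Cap + 1 / n) = n * Cap + 1" using n1 by (simp add: field_simps)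
    moreover have "real n * ((1 - e n) * Rc) = (1 - e n) * (n * Rc)" by simp
    ultimately have "real n * ((1 - e n) * Rc) \<le> real n * (Cap + 1 / n)" by linarith
    then show ?thesis using n1 by (simp add: mult_le_cancel_left_pos)
  qed
  have "(\<lambda>n. (1 - e n) * Rc) \<longlonglongrightarrow> (1 - 0) * Rc"
    using err unfolding e_def[symmetric] by (intro tendsto_intros) auto
  moreover have "(\<lambda>n. Cap + 1 / real n) \<longlonglongrightarrow> Cap + 0"
    by (intro tendsto_intros)
  ultimately have "(1 - 0) * Rc \<le> Cap + 0"
    by (rule LIMSEQ_le) (use key in auto)
  then show ?thesis unfolding Cap_def by simp
qed

end
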